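(* Let $G$ be a finitely presentable group with no elements of order two. Then there exists a finite presentation $\Pi$ of $G$ such that $\ell(\Pi)=T(G)$ and every relator of $\Pi$ has length at least three; consequently $T_1(G)\le\ell_1(\Pi)\le 3\ell(\Pi)=3T(G)$. In particular, \[ T(G)\le T_1(G)\le 3T(G). \]
   Context: For a finite presentation $\Pi=\langle X\mid R\rangle$: $\ell(\Pi)=\sum_{r\in R}\max\{|r|-2,0\}$ and $\ell_1(\Pi)=\sum_{r\in R}|r|$. For a finitely presentable group $G$: $T(G)=\min\{\ell(\Pi)\}$ and $T_1(G)=\min\{\ell_1(\Pi)\}$, the minima taken over all finite presentations $\Pi$ of $G$. *)

theory Defs
  imports "HOL-Algebra.Algebra"
begin

text \<open>Letters of a free group on generators from nat: (a, True) is the generator a,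
  (a, False) is its inverse.  Words are lists of letters.\<close>

type_synonym letter = "nat \<times> bool"
type_synonym word = "letter list"

definition letter_inv :: "letter \<Rightarrow> letter" where
  "letter_inv l = (fst l, \<not> snd l)"

definition word_inv :: "word \<Rightarrow> word" where
  "word_inv w = rev (map letter_inv w)"

definition words_on :: "nat set \<Rightarrow> word set" where
  "words_on Xs = {w. fst ` set w \<subseteq> Xs}"

type_synonym presentation = "nat set \<times> word set"

definition is_fin_presentation :: "presentation \<Rightarrow> bool" where
  "is_fin_presentation P \<longleftrightarrow> finite (fst P) \<and> finite (snd P) \<and> snd P \<subseteq> words_on (fst P)"

text \<open>Words representing elements of the normal closure of R in the free group on Xs
  (closed under free insertion/cancellation of inverse pairs).\<close>

inductive_set ncl :: "nat set \<Rightarrow> word set \<Rightarrow> word set" for Xs R where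
  nil: "[] \<in> ncl Xs R"
| rel: "r \<in> R \<Longrightarrow> r \<in> ncl Xs R"
| invw: "w \<in> ncl Xs R \<Longrightarrow> word_inv w \<in> ncl Xs R"
| app: "u \<in> ncl Xs R \<Longrightarrow> v \<in> ncl Xs R \<Longrightarrow> u @ v \<in> ncl Xs R"
| conj: "w \<in> ncl Xs R \<Longrightarrow> fst l \<in> Xs \<Longrightarrow> l # w @ [letter_inv l] \<in> ncl Xs R"
| ins: "u @ v \<in> ncl Xs R \<Longrightarrow> fst l \<in> Xs \<Longrightarrow> u @ [l, letter_inv l] @ v \<in> ncl Xs R"
| del: "u @ [l, letter_inv l] @ v \<in> ncl Xs R \<Longrightarrow> u @ v \<in> ncl Xs R"

definition pres_rel :: "presentation \<Rightarrow> (word \<times> word) set" where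
  "pres_rel P = {(u, v). u \<in> words_on (fst P) \<and> v \<in> words_on (fst P)
                          \<and> u @ word_inv v \<in> ncl (fst P) (snd P)}"

definition presented_group :: "presentation \<Rightarrow> word set monoid" where
  "presented_group P =
     \<lparr> carrier = words_on (fst P) // pres_rel P,
       monoid.mult = (\<lambda>A B. pres_rel P `` {(SOME a. a \<in> A) @ (SOME b. b \<in> B)}),
       one = pres_rel P `` {[]} \<rparr>"

definition presents :: "('g, 'b) monoid_scheme \<Rightarrow> presentation \<Rightarrow> bool" where
  "presents G P \<longleftrightarrow> is_fin_presentation P \<and> G \<cong> presented_group P"

definition finitely_presentable :: "('g, 'b) monoid_scheme \<Rightarrow> bool" where
  "finitely_presentable G \<longleftrightarrow> (\<exists>P. presents G P)"

text \<open>ell(P) = sum over relators of max(|r|-2, 0) (truncated nat subtraction), and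
  ell_1(P) = sum of relator lengths.\<close>

definition ell :: "presentation \<Rightarrow> nat" where
  "ell P = (\<Sum>r\<in>snd P. length r - 2)"

definition ell1 :: "presentation \<Rightarrow> nat" where
  "ell1 P = (\<Sum>r\<in>snd P. length r)"

definition T_inv :: "('g, 'b) monoid_scheme \<Rightarrow> nat" where
  "T_inv G = (LEAST n. \<exists>P. presents G P \<and> ell P = n)"

definition T1_inv :: "('g, 'b) monoid_scheme \<Rightarrow> nat" where
  "T1_inv G = (LEAST n. \<exists>P. presents G P \<and> ell1 P = n)"

definition no_order_two :: "('g, 'b) monoid_scheme \<Rightarrow> bool" where
  "no_order_two G \<longleftrightarrow> (\<forall>x\<in>carrier G. x \<otimes>\<^bsub>G\<^esub> x = \<one>\<^bsub>G\<^esub> \<longrightarrow> x = \<one>\<^bsub>G\<^esub>)"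

end

theory Submission
  imports Defs
begin

lemma li_li[simp]: "letter_inv (letter_inv l) = l"
  by (simp add: letter_inv_def)
lemma fst_li[simp]: "fst (letter_inv l) = fst l"
  by (simp add: letter_inv_def)
lemma wi_nil[simp]: "word_inv [] = []" by (simp add: word_inv_def)
lemma wi_cons[simp]: "word_inv (a # u) = word_inv u @ [letter_inv a]" by (simp add: word_inv_def)
lemma wi_app[simp]: "word_inv (u @ v) = word_inv v @ word_inv u" by (simp add: word_inv_def)
lemma wi_wi[simp]: "word_inv (word_inv u) = u" by (simp add: word_inv_def rev_map comp_def)
lemma wi_len[simp]: "length (word_inv u) = length u" by (simp add: word_inv_def)
lemma wo_nil[simp]: "[] \<in> words_on Y" by (simp add: words_on_def)
lemma wo_cons[simp]: "(a # u \<in> words_on Y) = (fst a \<in> Y \<and> u \<in> words_on Y)" by (simp add: words_on_def)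
lemma wo_app[simp]: "(u @ v \<in> words_on Y) = (u \<in> words_on Y \<and> v \<in> words_on Y)" by (auto simp add: words_on_def)
lemma wo_inv[simp]: "(word_inv u \<in> words_on Y) = (u \<in> words_on Y)" by (auto simp add: words_on_def word_inv_def image_image)

lemma ncl_words: "w \<in> ncl Xs R \<Longrightarrow> R \<subseteq> words_on Xs \<Longrightarrow> w \<in> words_on Xs"
  by (induction rule: ncl.induct) auto

lemma ncl_conjw: "w \<in> ncl Xs R \<Longrightarrow> t \<in> words_on Xs \<Longrightarrow> t @ w @ word_inv t \<in> ncl Xs R"
proof (induction t)
  case (Cons a t)
  then have "a # (t @ w @ word_inv t) @ [letter_inv a] \<in> ncl Xs R"
    by (intro ncl.conj) auto
  then show ?case by simp
qed simp

lemma ncl_insw: "x @ y \<in> ncl Xs R \<Longrightarrow> t \<in> words_on Xs \<Longrightarrow> x @ t @ word_inv t @ y \<in> ncl Xs R"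
proof (induction t arbitrary: x y)
  case (Cons a t)
  have "x @ [a, letter_inv a] @ y \<in> ncl Xs R" using Cons by (intro ncl.ins) auto
  then have "(x @ [a]) @ t @ word_inv t @ ([letter_inv a] @ y) \<in> ncl Xs R"
    using Cons by (intro Cons.IH) auto
  then show ?case by simp
qed simp

lemma ncl_delw: "x @ t @ word_inv t @ y \<in> ncl Xs R \<Longrightarrow> x @ y \<in> ncl Xs R"
proof (induction t arbitrary: x y)
  case (Cons a t)
  have "(x @ [a]) @ t @ word_inv t @ ([letter_inv a] @ y) \<in> ncl Xs R"
    using Cons.prems by simp
  then have "x @ [a, letter_inv a] @ y \<in> ncl Xs R" using Cons.IH by fastforce
  then show ?case by (rule ncl.del)
qed simp

lemma ncl_delw2: "x @ word_inv t @ t @ y \<in> ncl Xs R \<Longrightarrow> x @ y \<in> ncl Xs R"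
  using ncl_delw[of x "word_inv t" y] by simp

lemma ncl_mono: "w \<in> ncl Xs R \<Longrightarrow> Xs \<subseteq> Xs' \<Longrightarrow> R \<subseteq> ncl Xs' R' \<Longrightarrow> w \<in> ncl Xs' R'"
proof (induction rule: ncl.induct)
  case (ins u v l)
  then show ?case using ncl.ins[of u v Xs' R' l] by auto
qed (auto intro: ncl.intros)

lemma ncl_trivial: "t \<in> words_on Xs \<Longrightarrow> t @ word_inv t \<in> ncl Xs R"
  using ncl_insw[of "[]" "[]" Xs R t] by (simp add: ncl.nil)

lemma ncl_rot: "u @ v \<in> ncl Xs R \<Longrightarrow> u \<in> words_on Xs \<Longrightarrow> v @ u \<in> ncl Xs R"
proof -
  assume a: "u @ v \<in> ncl Xs R" "u \<in> words_on Xs"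
  have "word_inv u @ (u @ v) @ word_inv (word_inv u) \<in> ncl Xs R"
    using a by (intro ncl_conjw) auto
  then have "[] @ word_inv u @ u @ (v @ u) \<in> ncl Xs R" by simp
  then show ?thesis using ncl_delw2[of "[]" u "v @ u"] by simp
qed

definition eqv :: "nat set \<Rightarrow> word set \<Rightarrow> word \<Rightarrow> word \<Rightarrow> bool" where
  "eqv Xs R u v \<longleftrightarrow> u \<in> words_on Xs \<and> v \<in> words_on Xs \<and> u @ word_inv v \<in> ncl Xs R"

lemma pres_rel_eqv: "pres_rel (Xs, R) = {(u,v). eqv Xs R u v}"
  by (auto simp: pres_rel_def eqv_def)

lemma eqv_refl: "u \<in> words_on Xs \<Longrightarrow> eqv Xs R u u"
  by (simp add: eqv_def ncl_trivial)

lemma eqv_sym: "eqv Xs R u v \<Longrightarrow> eqv Xs R v u"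
  unfolding eqv_def using ncl.invw by fastforce

lemma eqv_trans: "eqv Xs R u v \<Longrightarrow> eqv Xs R v w \<Longrightarrow> eqv Xs R u w"
  unfolding eqv_def
proof (elim conjE, intro conjI)
  assume "u @ word_inv v \<in> ncl Xs R" "v @ word_inv w \<in> ncl Xs R"
  then have "u @ word_inv v @ v @ word_inv w \<in> ncl Xs R" using ncl.app by fastforce
  then show "u @ word_inv w \<in> ncl Xs R" by (rule ncl_delw2)
qed

lemma eqv_cong: "eqv Xs R u u' \<Longrightarrow> eqv Xs R v v' \<Longrightarrow> eqv Xs R (u @ v) (u' @ v')"
  unfolding eqv_def
proof (elim conjE, intro conjI)
  assume a: "u @ word_inv u' \<in> ncl Xs R" "v @ word_inv v' \<in> ncl Xs R" "u \<in> words_on Xs"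
  then have "u @ (v @ word_inv v') @ word_inv u \<in> ncl Xs R" by (intro ncl_conjw)
  then have "(u @ v @ word_inv v') @ word_inv u @ u @ word_inv u' \<in> ncl Xs R"
    using ncl.app[OF _ a(1)] by fastforce
  then have "(u @ v @ word_inv v') @ word_inv u' \<in> ncl Xs R" by (rule ncl_delw2)
  then show "(u @ v) @ word_inv (u' @ v') \<in> ncl Xs R" by simp
qed auto

lemma eqv_inv: "eqv Xs R u v \<Longrightarrow> eqv Xs R (word_inv u) (word_inv v)"
  unfolding eqv_def
proof (elim conjE, intro conjI)
  assume a: "u @ word_inv v \<in> ncl Xs R" "u \<in> words_on Xs" 
  then have "v @ word_inv u \<in> ncl Xs R" using ncl.invw by fastforce
  then have "word_inv u @ (v @ word_inv u) @ word_inv (word_inv u) \<in> ncl Xs R"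
    using a by (intro ncl_conjw) auto
  then have "(word_inv u @ v) @ word_inv u @ u @ [] \<in> ncl Xs R" by simp
  then have "(word_inv u @ v) @ [] \<in> ncl Xs R" by (rule ncl_delw2)
  then show "word_inv u @ word_inv (word_inv v) \<in> ncl Xs R" by simp
qed auto

lemma eqv_equiv: "equiv (words_on Xs) {(u,v). eqv Xs R u v}"
  unfolding equiv_def refl_on_def sym_def trans_def
  by (auto simp: eqv_refl intro: eqv_sym eqv_trans) (auto simp: eqv_def)

abbreviation cls :: "nat set \<Rightarrow> word set \<Rightarrow> word \<Rightarrow> word set" where
  "cls Xs R u \<equiv> {(u,v). eqv Xs R u v} `` {u}"

lemma pg_carrier: "carrier (presented_group (Xs,R)) = words_on Xs // {(u,v). eqv Xs R u v}"
  by (simp add: presented_group_def pres_rel_eqv)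

lemma pg_one: "one (presented_group (Xs,R)) = cls Xs R []"
  by (simp add: presented_group_def pres_rel_eqv)

lemma cls_eq_iff: "u \<in> words_on Xs \<Longrightarrow> v \<in> words_on Xs \<Longrightarrow> (cls Xs R u = cls Xs R v) = eqv Xs R u v"
  using equiv_class_eq_iff[OF eqv_equiv[of Xs R], of u v] by simp

lemma mem_cls: "(a \<in> cls Xs R u) = eqv Xs R u a" by simp

lemma some_cls: "u \<in> words_on Xs \<Longrightarrow> eqv Xs R u (SOME a. a \<in> cls Xs R u)"
proof -
  assume "u \<in> words_on Xs"
  then have "u \<in> cls Xs R u" by (simp add: eqv_refl)
  then have "(SOME a. a \<in> cls Xs R u) \<in> cls Xs R u" by (rule someI)
  then show ?thesis by simp
qed

lemma eqv_words: "eqv Xs R u v \<Longrightarrow> u \<in> words_on Xs \<and> v \<in> words_on Xs"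
  by (simp add: eqv_def)

lemma pg_mult: "u \<in> words_on Xs \<Longrightarrow> v \<in> words_on Xs \<Longrightarrow>
   cls Xs R u \<otimes>\<^bsub>presented_group (Xs,R)\<^esub> cls Xs R v = cls Xs R (u @ v)"
proof -
  assume u: "u \<in> words_on Xs" and v: "v \<in> words_on Xs"
  let ?a = "SOME a. a \<in> cls Xs R u" and ?b = "SOME a. a \<in> cls Xs R v"
  have a: "eqv Xs R u ?a" and b: "eqv Xs R v ?b" using some_cls u v by auto
  have e: "eqv Xs R (?a @ ?b) (u @ v)" using eqv_cong[OF eqv_sym[OF a] eqv_sym[OF b]] .
  have "cls Xs R (?a @ ?b) = cls Xs R (u @ v)"
    using e eqv_words[OF e] by (simp only: cls_eq_iff)
  then show ?thesis by (simp add: presented_group_def pres_rel_eqv)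
qed

lemma pg_carrierE: "A \<in> carrier (presented_group (Xs,R)) \<Longrightarrow> (\<And>u. u \<in> words_on Xs \<Longrightarrow> A = cls Xs R u \<Longrightarrow> P) \<Longrightarrow> P"
  unfolding pg_carrier by (auto elim!: quotientE)

lemma pg_carrierI: "u \<in> words_on Xs \<Longrightarrow> cls Xs R u \<in> carrier (presented_group (Xs,R))"
  unfolding pg_carrier by (rule quotientI)

lemma pg_same: "ncl Xs R = ncl Xs R' \<Longrightarrow> presented_group (Xs,R) = presented_group (Xs,R')"
  by (simp add: presented_group_def pres_rel_def)

lemma ncl_eq_add: "r \<in> ncl Xs R \<Longrightarrow> ncl Xs (insert r R) = ncl Xs R"
proof (rule equalityI; rule subsetI)
  fix v assume "r \<in> ncl Xs R" "v \<in> ncl Xs (insert r R)"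
  moreover have "R \<subseteq> ncl Xs R" using ncl.rel by blast
  ultimately show "v \<in> ncl Xs R" using ncl_mono[of v Xs "insert r R" Xs R] by blast
next
  fix v assume "v \<in> ncl Xs R"
  moreover have "R \<subseteq> ncl Xs (insert r R)" using ncl.rel by blast
  ultimately show "v \<in> ncl Xs (insert r R)" using ncl_mono[of v Xs R Xs "insert r R"] by blast
qed

lemma ncl_eq_del: "r \<in> R \<Longrightarrow> r \<in> ncl Xs (R - {r}) \<Longrightarrow> ncl Xs (R - {r}) = ncl Xs R"
  using ncl_eq_add[of r Xs "R - {r}"] by (simp add: insert_absorb)

definition subl :: "nat \<Rightarrow> word \<Rightarrow> letter \<Rightarrow> word" where
  "subl x w l = (if fst l = x then (if snd l then w else word_inv w) else [l])"

definition subw :: "nat \<Rightarrow> word \<Rightarrow> word \<Rightarrow> word" where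
  "subw x w u = concat (map (subl x w) u)"

lemma subw_nil[simp]: "subw x w [] = []" by (simp add: subw_def)
lemma subw_cons[simp]: "subw x w (a # u) = subl x w a @ subw x w u" by (simp add: subw_def)
lemma subw_app[simp]: "subw x w (u @ v) = subw x w u @ subw x w v" by (simp add: subw_def)
lemma subl_inv: "subl x w (letter_inv a) = word_inv (subl x w a)"
  by (auto simp: subl_def letter_inv_def)
lemma subw_inv[simp]: "subw x w (word_inv u) = word_inv (subw x w u)"
  by (induction u) (auto simp: subl_inv)
lemma subw_words: "u \<in> words_on Xs \<Longrightarrow> w \<in> words_on (Xs - {x}) \<Longrightarrow> subw x w u \<in> words_on (Xs - {x})"
  by (induction u) (auto simp: subl_def)
lemma subw_id: "u \<in> words_on (Xs - {x}) \<Longrightarrow> subw x w u = u"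
  by (induction u) (auto simp: subl_def)
lemma subw_len: "length w \<le> 1 \<Longrightarrow> length (subw x w u) \<le> length u"
  by (induction u) (auto simp: subl_def)

lemma subw_ncl:
  assumes "u \<in> ncl Xs R" "R \<subseteq> words_on Xs" "w \<in> words_on (Xs - {x})"
  shows "subw x w u \<in> ncl (Xs - {x}) (subw x w ` R)"
  using assms
proof (induction rule: ncl.induct)
  case nil then show ?case by (simp add: ncl.nil)
next
  case (rel r) then show ?case by (auto intro: ncl.rel)
next
  case (invw u) then show ?case using ncl.invw by fastforce
next
  case (app u v) then show ?case using ncl.app by fastforce
next
  case (conj u l)
  have "subl x w l \<in> words_on (Xs - {x})" using conj by (auto simp: subl_def)
  then show ?case using ncl_conjw[OF conj.IH[OF conj.prems]] by (simp add: subl_inv)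
next
  case (ins u v l)
  have s: "subl x w l \<in> words_on (Xs - {x})" using ins by (auto simp: subl_def)
  have "subw x w u @ subw x w v \<in> ncl (Xs - {x}) (subw x w ` R)" using ins.IH ins.prems by simp
  from ncl_insw[OF this s] show ?case by (simp add: subl_inv)
next
  case (del u l v)
  then show ?case using ncl_delw[of "subw x w u" "subl x w l" "subw x w v"] by (simp add: subl_inv)
qed

lemma wo_mono: "A \<subseteq> B \<Longrightarrow> u \<in> words_on A \<Longrightarrow> u \<in> words_on B"
  by (auto simp: words_on_def)

lemma eqv_subw:
  assumes R: "(x,True) # word_inv w \<in> R" and w: "w \<in> words_on (Xs - {x})" and x: "x \<in> Xs"
    and u: "u \<in> words_on Xs"
  shows "eqv Xs R u (subw x w u)"
  using u
proof (induction u)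
  case Nil then show ?case by (simp add: eqv_refl)
next
  case (Cons a u)
  have wX: "w \<in> words_on Xs" using w wo_mono[of "Xs - {x}" Xs] by blast
  have ha: "eqv Xs R [a] (subl x w a)"
  proof (cases "fst a = x")
    case True
    have e1: "eqv Xs R [(x,True)] w"
      using R wX x by (auto simp: eqv_def intro: ncl.rel)
    show ?thesis
    proof (cases "snd a")
      case True
      then have "a = (x,True)" using \<open>fst a = x\<close> by (cases a) auto
      then show ?thesis using e1 by (simp add: subl_def)
    next
      case False
      then have "a = (x,False)" using \<open>fst a = x\<close> by (cases a) auto
      then show ?thesis using eqv_inv[OF e1] by (simp add: subl_def letter_inv_def)
    qed
  next
    case False
    then show ?thesis using Cons.prems by (simp add: subl_def eqv_refl)
  qed
  have "eqv Xs R u (subw x w u)" using Cons by simp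
  from eqv_cong[OF ha this] show ?case by simp
qed

lemma elim_iso:
  assumes RW: "R \<subseteq> words_on Xs" and x: "x \<in> Xs" and w: "w \<in> words_on (Xs - {x})"
    and R: "(x,True) # word_inv w \<in> R"
  shows "presented_group (Xs,R) \<cong> presented_group (Xs - {x}, subw x w ` R)"
proof -
  let ?X = "Xs - {x}" and ?R = "subw x w ` R" and ?s = "subw x w"
  let ?G = "presented_group (Xs,R)" and ?H = "presented_group (?X, ?R)"
  have sW: "\<And>u. u \<in> words_on Xs \<Longrightarrow> ?s u \<in> words_on ?X" using subw_words w by blast
  have XX: "?X \<subseteq> Xs" by blast
  have es: "\<And>u. u \<in> words_on Xs \<Longrightarrow> eqv Xs R u (?s u)" using eqv_subw[OF R w x] by blast
  have RN: "?R \<subseteq> ncl Xs R"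
  proof
    fix r assume "r \<in> ?R"
    then obtain r0 where r0: "r0 \<in> R" "r = ?s r0" by blast
    have r0W: "r0 \<in> words_on Xs" using r0 RW by blast
    have "eqv Xs R r0 []" using r0 r0W by (simp add: eqv_def ncl.rel)
    from eqv_trans[OF eqv_sym[OF es[OF r0W]] this] show "r \<in> ncl Xs R"
      using r0 by (simp add: eqv_def)
  qed
  have fwd: "\<And>u v. eqv Xs R u v \<Longrightarrow> eqv ?X ?R (?s u) (?s v)"
  proof -
    fix u v assume e: "eqv Xs R u v"
    then have "u @ word_inv v \<in> ncl Xs R" by (simp add: eqv_def)
    from subw_ncl[OF this RW w] have "?s (u @ word_inv v) \<in> ncl ?X ?R" .
    then show "eqv ?X ?R (?s u) (?s v)" using e sW by (simp add: eqv_def)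
  qed
  have bwd: "\<And>u v. u \<in> words_on Xs \<Longrightarrow> v \<in> words_on Xs \<Longrightarrow> eqv ?X ?R (?s u) (?s v) \<Longrightarrow> eqv Xs R u v"
  proof -
    fix u v assume u: "u \<in> words_on Xs" and v: "v \<in> words_on Xs" and e: "eqv ?X ?R (?s u) (?s v)"
    have "?s u @ word_inv (?s v) \<in> ncl Xs R"
      using e ncl_mono[OF _ XX RN] by (simp add: eqv_def)
    then have "eqv Xs R (?s u) (?s v)" using sW u v wo_mono[OF XX] by (simp add: eqv_def)
    then show "eqv Xs R u v" using es u v by (meson eqv_sym eqv_trans)
  qed
  define h where "h A = cls ?X ?R (?s (SOME a. a \<in> A))" for A
  have hc: "\<And>u. u \<in> words_on Xs \<Longrightarrow> h (cls Xs R u) = cls ?X ?R (?s u)"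
  proof -
    fix u assume u: "u \<in> words_on Xs"
    have "eqv Xs R u (SOME a. a \<in> cls Xs R u)" using some_cls[OF u] .
    from fwd[OF this] have e: "eqv ?X ?R (?s (SOME a. a \<in> cls Xs R u)) (?s u)" by (rule eqv_sym)
    show "h (cls Xs R u) = cls ?X ?R (?s u)"
      unfolding h_def using e eqv_words[OF e] by (simp only: cls_eq_iff)
  qed
  have hom: "h \<in> hom ?G ?H"
    unfolding hom_def
  proof (intro CollectI conjI ballI Pi_I)
    fix A assume "A \<in> carrier ?G"
    then show "h A \<in> carrier ?H"
    proof (rule pg_carrierE)
      fix u assume u: "u \<in> words_on Xs" and Au: "A = cls Xs R u"
      have "h A = cls ?X ?R (?s u)" unfolding Au by (rule hc[OF u])
      then show ?thesis using pg_carrierI[OF sW[OF u]] by (simp only:)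
    qed
  next
    fix A B assume A: "A \<in> carrier ?G" and B: "B \<in> carrier ?G"
    show "h (A \<otimes>\<^bsub>?G\<^esub> B) = h A \<otimes>\<^bsub>?H\<^esub> h B"
      using A
    proof (rule pg_carrierE)
      fix u assume u: "u \<in> words_on Xs" and Au: "A = cls Xs R u"
      show ?thesis using B
      proof (rule pg_carrierE)
        fix v assume v: "v \<in> words_on Xs" and Bv: "B = cls Xs R v"
        have "h (A \<otimes>\<^bsub>?G\<^esub> B) = h (cls Xs R (u @ v))" unfolding Au Bv using u v by (simp only: pg_mult)
        also have "\<dots> = cls ?X ?R (?s u @ ?s v)" using hc[of "u @ v"] u v by simp
        also have "\<dots> = cls ?X ?R (?s u) \<otimes>\<^bsub>?H\<^esub> cls ?X ?R (?s v)" using sW[OF u] sW[OF v] by (simp only: pg_mult)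
        also have "\<dots> = h A \<otimes>\<^bsub>?H\<^esub> h B" unfolding Au Bv using hc u v by (simp only:)
        finally show ?thesis .
      qed
    qed
  qed
  have inj: "inj_on h (carrier ?G)"
  proof (rule inj_onI)
    fix A B assume A: "A \<in> carrier ?G" and B: "B \<in> carrier ?G" and hAB: "h A = h B"
    show "A = B"
      using A
    proof (rule pg_carrierE)
      fix u assume u: "u \<in> words_on Xs" and Au: "A = cls Xs R u"
      show ?thesis using B
      proof (rule pg_carrierE)
        fix v assume v: "v \<in> words_on Xs" and Bv: "B = cls Xs R v"
        have "cls ?X ?R (?s u) = cls ?X ?R (?s v)" using hAB hc[OF u] hc[OF v] unfolding Au Bv by (simp only:)
        then have "eqv ?X ?R (?s u) (?s v)" using sW u v by (simp only: cls_eq_iff)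
        then have "eqv Xs R u v" using bwd u v by blast
        then show ?thesis using u v Au Bv by (simp only: cls_eq_iff)
      qed
    qed
  qed
  have surj: "h ` carrier ?G = carrier ?H"
  proof
    show "h ` carrier ?G \<subseteq> carrier ?H" using hom by (auto simp: hom_def)
  next
    show "carrier ?H \<subseteq> h ` carrier ?G"
    proof
      fix B assume "B \<in> carrier ?H"
      then show "B \<in> h ` carrier ?G"
      proof (rule pg_carrierE)
        fix v assume v: "v \<in> words_on ?X" and Bv: "B = cls ?X ?R v"
        have vX: "v \<in> words_on Xs" using wo_mono[OF XX v] .
        have "h (cls Xs R v) = B" using hc[OF vX] subw_id[OF v] Bv by (simp only:)
        moreover have "cls Xs R v \<in> carrier ?G" using vX by (rule pg_carrierI)
        ultimately show ?thesis by blast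
      qed
    qed
  qed
  have "h \<in> iso ?G ?H" using hom inj surj by (simp add: iso_iff)
  then show ?thesis by (rule is_isoI)
qed

lemma eqv_nil_iff: "u \<in> words_on Xs \<Longrightarrow> eqv Xs R u [] = (u \<in> ncl Xs R)"
  by (simp add: eqv_def)

lemma cls_eqI: assumes e: "eqv Xs R u v" shows "cls Xs R u = cls Xs R v"
proof -
  have "u \<in> words_on Xs" "v \<in> words_on Xs" using eqv_words[OF e] by auto
  then show ?thesis using e cls_eq_iff[of u Xs v R] by (simp only:)
qed

lemma cls_eqD: assumes "cls Xs R u = cls Xs R v" "u \<in> words_on Xs" "v \<in> words_on Xs"
  shows "eqv Xs R u v"
  using assms cls_eq_iff[of u Xs v R] by (simp only:)

lemma no2_transfer:
  assumes grp: "group G" and no2: "no_order_two G" and iso: "G \<cong> presented_group (Xs,R)"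
    and a: "fst a \<in> Xs" and aa: "[a,a] \<in> ncl Xs R"
  shows "[a] \<in> ncl Xs R"
proof -
  let ?H = "presented_group (Xs,R)"
  obtain h where h: "h \<in> iso G ?H" using iso by (auto simp: is_iso_def)
  have hh: "h \<in> hom G ?H" and bij: "bij_betw h (carrier G) (carrier ?H)" using h by (auto simp: iso_def)
  have hmul: "\<And>x y. x \<in> carrier G \<Longrightarrow> y \<in> carrier G \<Longrightarrow> h (x \<otimes>\<^bsub>G\<^esub> y) = h x \<otimes>\<^bsub>?H\<^esub> h y"
    using hh by (auto simp: hom_def)
  have hcar: "\<And>x. x \<in> carrier G \<Longrightarrow> h x \<in> carrier ?H" using hh by (auto simp: hom_def)
  have injh: "inj_on h (carrier G)" using bij by (auto simp: bij_betw_def)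
  have aW: "[a] \<in> words_on Xs" using a by simp
  let ?e = "cls Xs R [a]"
  have eC: "?e \<in> carrier ?H" using aW by (rule pg_carrierI)
  have "?e \<otimes>\<^bsub>?H\<^esub> ?e = cls Xs R [a,a]" using aW pg_mult[OF aW aW] by simp
  also have "\<dots> = cls Xs R []"
    using aa a by (intro cls_eqI) (simp add: eqv_def)
  finally have ee: "?e \<otimes>\<^bsub>?H\<^esub> ?e = \<one>\<^bsub>?H\<^esub>" by (simp only: pg_one)
  have one1: "\<one>\<^bsub>G\<^esub> \<in> carrier G" using grp by (simp add: group.is_group monoid.one_closed group.is_monoid)
  have "h \<one>\<^bsub>G\<^esub> \<in> carrier ?H" using hcar one1 .
  then obtain u where u: "u \<in> words_on Xs" and hu: "h \<one>\<^bsub>G\<^esub> = cls Xs R u" by (rule pg_carrierE)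
  have "h \<one>\<^bsub>G\<^esub> = h (\<one>\<^bsub>G\<^esub> \<otimes>\<^bsub>G\<^esub> \<one>\<^bsub>G\<^esub>)" using grp by (simp add: group.is_monoid monoid.l_one one1)
  also have "\<dots> = h \<one>\<^bsub>G\<^esub> \<otimes>\<^bsub>?H\<^esub> h \<one>\<^bsub>G\<^esub>" using hmul one1 by blast
  also have "\<dots> = cls Xs R (u @ u)" unfolding hu using u by (simp only: pg_mult)
  finally have "cls Xs R u = cls Xs R (u @ u)" unfolding hu .
  then have "eqv Xs R (u @ u) u" using u by (intro cls_eqD) simp_all
  then have "u @ u @ word_inv u @ [] \<in> ncl Xs R" by (simp add: eqv_def)
  then have "u @ [] \<in> ncl Xs R" by (rule ncl_delw)
  then have "eqv Xs R u []" using u by (simp add: eqv_def)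
  then have "cls Xs R u = cls Xs R []" by (rule cls_eqI)
  then have h1: "h \<one>\<^bsub>G\<^esub> = \<one>\<^bsub>?H\<^esub>" using hu by (simp only: pg_one)
  define g where "g = inv_into (carrier G) h ?e"
  have g: "g \<in> carrier G" "h g = ?e"
    unfolding g_def using bij_betw_inv_into_right[OF bij eC] bij_betwE[OF bij_betw_inv_into[OF bij]] eC by auto
  have ggC: "g \<otimes>\<^bsub>G\<^esub> g \<in> carrier G" using grp g by (simp add: group.is_monoid monoid.m_closed)
  have "h (g \<otimes>\<^bsub>G\<^esub> g) = h \<one>\<^bsub>G\<^esub>" using hmul[OF g(1) g(1)] g(2) ee h1 by simp
  then have "g \<otimes>\<^bsub>G\<^esub> g = \<one>\<^bsub>G\<^esub>" using inj_onD[OF injh _ ggC one1] by blast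
  then have "g = \<one>\<^bsub>G\<^esub>" using no2 g by (auto simp: no_order_two_def)
  then have "?e = cls Xs R []" using g h1 by (simp only: pg_one)
  then have "eqv Xs R [a] []" using aW by (intro cls_eqD) simp_all
  then show ?thesis by (simp add: eqv_def)
qed

lemma single_pos: "[a] \<in> ncl Xs R \<Longrightarrow> [(fst a, True)] \<in> ncl Xs R"
proof (cases "snd a")
  case True
  assume "[a] \<in> ncl Xs R"
  moreover have "a = (fst a, True)" using True by (cases a) auto
  ultimately show ?thesis by simp
next
  case False
  assume "[a] \<in> ncl Xs R"
  then have "word_inv [a] \<in> ncl Xs R" by (rule ncl.invw)
  moreover have "word_inv [a] = [(fst a, True)]" using False by (cases a) (simp add: letter_inv_def)
  ultimately show ?thesis by simp
qed

lemma short_cases: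
  assumes RW: "R \<subseteq> words_on Xs" and r: "r \<in> R" and len: "length r < 3"
    and grp: "group G" and no2: "no_order_two G" and iso: "G \<cong> presented_group (Xs,R)"
  shows "r \<in> ncl Xs (R - {r}) \<or> (\<exists>x w. x \<in> Xs \<and> w \<in> words_on (Xs - {x}) \<and> length w \<le> 1
            \<and> (x,True) # word_inv w \<in> ncl Xs R)"
proof -
  have rW: "r \<in> words_on Xs" using r RW by blast
  have rN: "r \<in> ncl Xs R" using r by (rule ncl.rel)
  have single: "?thesis" if a: "[a] \<in> ncl Xs R" "fst a \<in> Xs" for a
  proof -
    have "(fst a, True) # word_inv [] \<in> ncl Xs R" using single_pos[OF a(1)] by simp
    then show ?thesis using a(2) by (intro disjI2 exI[of _ "fst a"] exI[of _ "[]"]) simp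
  qed
  show ?thesis
  proof (cases r)
    case Nil then show ?thesis by (simp add: ncl.nil)
  next
    case (Cons a r1)
    show ?thesis
    proof (cases r1)
      case Nil
      then show ?thesis using single[of a] rN rW Cons by simp
    next
      case (Cons c r2)
      then have r2: "r2 = []" using len \<open>r = a # r1\<close> by simp
      have r_eq: "r = [a, c]" using \<open>r = a # r1\<close> Cons r2 by simp
      have aX: "fst a \<in> Xs" and cX: "fst c \<in> Xs" using rW r_eq by auto
      show ?thesis
      proof (cases "c = letter_inv a")
        case True
        have "[] @ [a, letter_inv a] @ [] \<in> ncl Xs (R - {r})"
          by (rule ncl.ins) (simp_all add: ncl.nil aX)
        then show ?thesis using True r_eq by simp
      next
        case cna: False
        show ?thesis
        proof (cases "fst c = fst a")
          case True
          then have "c = a" using cna by (cases a; cases c) (auto simp: letter_inv_def)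
          then have "[a,a] \<in> ncl Xs R" using rN r_eq by simp
          from no2_transfer[OF grp no2 iso aX this] show ?thesis using single aX by blast
        next
          case ne: False
          obtain x b where ab: "a = (x,b)" by (cases a)
          show ?thesis
          proof (cases b)
            case True
            have "(x,True) # word_inv [letter_inv c] \<in> ncl Xs R" using rN r_eq ab True by simp
            moreover have "[letter_inv c] \<in> words_on (Xs - {x})" using cX ne ab by simp
            ultimately show ?thesis using aX ab by (intro disjI2 exI[of _ x] exI[of _ "[letter_inv c]"]) simp
          next
            case False
            have "[(x,False)] @ [c] \<in> ncl Xs R" using rN r_eq ab False by simp
            moreover have "[(x,False)] \<in> words_on Xs" using aX ab by simp
            ultimately have "[c] @ [(x,False)] \<in> ncl Xs R" by (rule ncl_rot)
            then have "word_inv ([c] @ [(x,False)]) \<in> ncl Xs R" by (rule ncl.invw)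
            then have "(x,True) # word_inv [c] \<in> ncl Xs R" by (simp add: letter_inv_def)
            moreover have "[c] \<in> words_on (Xs - {x})" using cX ne ab by simp
            ultimately show ?thesis using aX ab by (intro disjI2 exI[of _ x] exI[of _ "[c]"]) simp
          qed
        qed
      qed
    qed
  qed
qed

lemma step:
  assumes pr: "presents G (Xs,R)" and grp: "group G" and no2: "no_order_two G"
    and r: "r \<in> R" and len: "length r < 3"
  shows "\<exists>P'. presents G P' \<and> ell P' \<le> ell (Xs,R) \<and>
           (card (fst P') < card Xs \<or> (fst P' = Xs \<and> card (snd P') < card R))"
proof -
  have fX: "finite Xs" and fR: "finite R" and RW: "R \<subseteq> words_on Xs" and iso: "G \<cong> presented_group (Xs,R)"
    using pr by (auto simp: presents_def is_fin_presentation_def)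
  from short_cases[OF RW r len grp no2 iso] show ?thesis
  proof
    assume rr: "r \<in> ncl Xs (R - {r})"
    have "presented_group (Xs, R - {r}) = presented_group (Xs, R)"
      by (rule pg_same) (rule ncl_eq_del[OF r rr])
    then have "presents G (Xs, R - {r})" using pr by (auto simp: presents_def is_fin_presentation_def)
    moreover have "ell (Xs, R - {r}) \<le> ell (Xs, R)" unfolding ell_def using fR by (simp add: sum_mono2)
    moreover have "card (R - {r}) < card R" using fR r by (rule card_Diff1_less)
    ultimately show ?thesis by (intro exI[of _ "(Xs, R - {r})"]) simp
  next
    assume "\<exists>x w. x \<in> Xs \<and> w \<in> words_on (Xs - {x}) \<and> length w \<le> 1 \<and> (x,True) # word_inv w \<in> ncl Xs R"
    then obtain x w where x: "x \<in> Xs" and w: "w \<in> words_on (Xs - {x})" and lw: "length w \<le> 1"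
      and rho: "(x,True) # word_inv w \<in> ncl Xs R" by blast
    let ?rho = "(x,True) # word_inv w"
    let ?R1 = "insert ?rho R"
    have pg1: "presented_group (Xs, ?R1) = presented_group (Xs, R)"
      by (rule pg_same) (rule ncl_eq_add[OF rho])
    have R1W: "?R1 \<subseteq> words_on Xs" using RW x w wo_mono[of "Xs - {x}" Xs w] by auto
    have iso2: "presented_group (Xs, ?R1) \<cong> presented_group (Xs - {x}, subw x w ` ?R1)"
      by (rule elim_iso[OF R1W x w]) simp
    have "G \<cong> presented_group (Xs - {x}, subw x w ` ?R1)" using iso pg1 iso2 iso_trans by metis
    moreover have "is_fin_presentation (Xs - {x}, subw x w ` ?R1)"
    proof -
      have "subw x w ` ?R1 \<subseteq> words_on (Xs - {x})" using R1W subw_words[OF _ w] by blast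
      then show ?thesis using fX fR by (simp add: is_fin_presentation_def)
    qed
    ultimately have "presents G (Xs - {x}, subw x w ` ?R1)" by (simp add: presents_def)
    moreover have "ell (Xs - {x}, subw x w ` ?R1) \<le> ell (Xs, R)"
    proof -
      let ?f = "\<lambda>r::word. length r - 2"
      have "ell (Xs - {x}, subw x w ` ?R1) = sum ?f (subw x w ` ?R1)" by (simp add: ell_def)
      also have "\<dots> \<le> sum (?f \<circ> subw x w) ?R1" using fR by (intro sum_image_le) auto
      also have "\<dots> \<le> sum ?f ?R1" using subw_len[OF lw] by (intro sum_mono) (simp add: diff_le_mono)
      also have "\<dots> \<le> ?f ?rho + sum ?f R" using fR by (simp add: sum.insert_if)
      also have "\<dots> = ell (Xs, R)" using lw by (simp add: ell_def)
      finally show ?thesis .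
    qed
    moreover have "card (Xs - {x}) < card Xs" using fX x by (rule card_Diff1_less)
    ultimately show ?thesis by (intro exI[of _ "(Xs - {x}, subw x w ` ?R1)"]) simp
  qed
qed

lemma ell_le_ell1: "ell P \<le> ell1 P"
  unfolding ell_def ell1_def by (rule sum_mono) simp

lemma ell1_le3: "\<forall>r\<in>snd P. length r \<ge> 3 \<Longrightarrow> ell1 P \<le> 3 * ell P"
  unfolding ell_def ell1_def sum_distrib_left by (rule sum_mono) auto

theorem lemma5p2:
  fixes G :: "('g, 'b) monoid_scheme"
  assumes "group G"
    and "finitely_presentable G"
    and "no_order_two G"
  shows "\<exists>P. presents G P \<and> ell P = T_inv G \<and> (\<forall>r\<in>snd P. length r \<ge> 3)
             \<and> T1_inv G \<le> ell1 P \<and> ell1 P \<le> 3 * ell P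
             \<and> T_inv G \<le> T1_inv G \<and> T1_inv G \<le> 3 * T_inv G"
proof -
  obtain P0 where P0: "presents G P0" using assms(2) by (auto simp: finitely_presentable_def)
  define T where "T = T_inv G"
  have Tle: "\<And>Q. presents G Q \<Longrightarrow> T \<le> ell Q"
    unfolding T_def T_inv_def by (rule Least_le) blast
  have "\<exists>P. presents G P \<and> ell P = T"
    unfolding T_def T_inv_def by (rule LeastI_ex) (use P0 in blast)
  define n0 where "n0 = (LEAST n. \<exists>P. presents G P \<and> ell P = T \<and> card (fst P) = n)"
  have "\<exists>P. presents G P \<and> ell P = T \<and> card (fst P) = n0"
    unfolding n0_def by (rule LeastI_ex) (use \<open>\<exists>P. presents G P \<and> ell P = T\<close> in blast)
  define m0 where "m0 = (LEAST m. \<exists>P. presents G P \<and> ell P = T \<and> card (fst P) = n0 \<and> card (snd P) = m)"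
  have "\<exists>P. presents G P \<and> ell P = T \<and> card (fst P) = n0 \<and> card (snd P) = m0"
    unfolding m0_def by (rule LeastI_ex) (use \<open>\<exists>P. presents G P \<and> ell P = T \<and> card (fst P) = n0\<close> in blast)
  then obtain P where P: "presents G P" "ell P = T" "card (fst P) = n0" "card (snd P) = m0" by blast
  have long: "\<forall>r\<in>snd P. length r \<ge> 3"
  proof (rule ccontr)
    assume "\<not> ?thesis"
    then obtain r where r: "r \<in> snd P" "length r < 3" by force
    obtain Xs R where PXR: "P = (Xs, R)" by (cases P)
    from step[of G Xs R r] P r assms obtain P' where P': "presents G P'" "ell P' \<le> ell (Xs,R)"
      "card (fst P') < card Xs \<or> (fst P' = Xs \<and> card (snd P') < card R)" by (auto simp: PXR)
    have eP': "ell P' = T" using P'(1,2) Tle[OF P'(1)] P(2) PXR by simp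
    show False
    proof (cases "card (fst P') < card Xs")
      case True
      then have "card (fst P') < n0" using P(3) PXR by simp
      from not_less_Least[OF this[unfolded n0_def]] show False using P'(1) eP' by blast
    next
      case False
      then have "fst P' = Xs" "card (snd P') < m0" using P'(3) P(4) PXR by auto
      then have "card (snd P') < m0" "card (fst P') = n0" using P(3) PXR by auto
      from not_less_Least[OF this(1)[unfolded m0_def]] show False using P'(1) eP' \<open>card (fst P') = n0\<close> by blast
    qed
  qed
  have T1le: "T1_inv G \<le> ell1 P"
    unfolding T1_inv_def by (rule Least_le) (use P(1) in blast)
  have e13: "ell1 P \<le> 3 * ell P" using long by (rule ell1_le3)
  have "\<exists>Q. presents G Q \<and> ell1 Q = T1_inv G"
    unfolding T1_inv_def by (rule LeastI_ex) (use P0 in blast)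
  then obtain Q where Q: "presents G Q" "ell1 Q = T1_inv G" by blast
  have "T \<le> T1_inv G" using Tle[OF Q(1)] ell_le_ell1[of Q] Q(2) by simp
  then show ?thesis using P long T1le e13 unfolding T_def[symmetric] by (intro exI[of _ P]) simp
qed

end
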